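(* Let $\operatorname{Hank}_n(\mathbb{C})$ be the space of $n\times n$ complex Hankel matrices. Let $\mu_h\in\operatorname{Hank}_n(\mathbb{C})^*\otimes(\mathbb{C}^n)^*\otimes\mathbb{C}^n$ be the structure tensor of the Hankel matrix-vector product $(H,v)\mapsto Hv$. Then $\operatorname{rank}(\mu_h)=\underline{\operatorname{rank}}(\mu_h)=2n-1$. Moreover, let $\mu_H\in\operatorname{Hank}_n(\mathbb{C})^*\otimes\operatorname{Hank}_n(\mathbb{C})^*\otimes\mathbb{C}^{n\times n}$ be the structure tensor of the Hankel matrix-Hankel matrix product $(H,K)\mapsto HK$. Then $\operatorname{rank}(\mu_H)\le n(2n-1)$.
   Context: A Hankel matrix is a square matrix whose $(i,j)$ entry depends only on $i+j$. Structure tensor of a bilinear map $\beta:U\times V\to W$: the unique $\mu_\beta\in U^*\otimes V^*\otimes W$ with $\beta(u,v)=\mu_\beta(u,v,\cdot)$. Rank: least number of decomposable tensors summing to the tensor; border rank: least $r$ such that it is a limit of tensors of rank at most $r$. *)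

theory Defs
  imports "HOL-Analysis.Analysis"
begin

text \<open>Vectors in C^m are represented as functions nat => complex (only indices < m matter).
  A 3-tensor in C^a (x) C^b (x) C^c is a function nat => nat => nat => complex,
  only indices i < a, j < b, k < c being relevant.\<close>

definition unit_vec :: "nat \<Rightarrow> nat \<Rightarrow> complex" where
  "unit_vec i = (\<lambda>t. if t = i then 1 else 0)"

definition structure_tensor ::
  "((nat \<Rightarrow> complex) \<Rightarrow> (nat \<Rightarrow> complex) \<Rightarrow> (nat \<Rightarrow> complex)) \<Rightarrow> nat \<Rightarrow> nat \<Rightarrow> nat \<Rightarrow> complex" where
  "structure_tensor \<beta> i j k = \<beta> (unit_vec i) (unit_vec j) k"

definition rank_le :: "nat \<Rightarrow> nat \<Rightarrow> nat \<Rightarrow> (nat \<Rightarrow> nat \<Rightarrow> nat \<Rightarrow> complex) \<Rightarrow> nat \<Rightarrow> bool" where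
  "rank_le a b c T r \<longleftrightarrow>
     (\<exists>u v w :: nat \<Rightarrow> nat \<Rightarrow> complex.
        \<forall>i<a. \<forall>j<b. \<forall>k<c. T i j k = (\<Sum>l<r. u l i * v l j * w l k))"

definition tensor_rank :: "nat \<Rightarrow> nat \<Rightarrow> nat \<Rightarrow> (nat \<Rightarrow> nat \<Rightarrow> nat \<Rightarrow> complex) \<Rightarrow> nat" where
  "tensor_rank a b c T = (LEAST r. rank_le a b c T r)"

text \<open>Border rank: least r such that T is a limit (in the Euclidean topology of the
  finite-dimensional space C^a (x) C^b (x) C^c, i.e. coordinatewise) of tensors of rank <= r.\<close>
definition border_rank :: "nat \<Rightarrow> nat \<Rightarrow> nat \<Rightarrow> (nat \<Rightarrow> nat \<Rightarrow> nat \<Rightarrow> complex) \<Rightarrow> nat" where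
  "border_rank a b c T = (LEAST r. \<exists>S :: nat \<Rightarrow> nat \<Rightarrow> nat \<Rightarrow> nat \<Rightarrow> complex.
      (\<forall>m. rank_le a b c (S m) r) \<and>
      (\<forall>i<a. \<forall>j<b. \<forall>k<c. (\<lambda>m. S m i j k) \<longlonglongrightarrow> T i j k))"

text \<open>Hank_n(C) is identified with C^(2n-1) via h |-> the Hankel matrix (h_(i+j))_(i,j<n);
  the basis vector e_k corresponds to the Hankel matrix with ones on the k-th antidiagonal.\<close>
definition hankel :: "(nat \<Rightarrow> complex) \<Rightarrow> nat \<Rightarrow> nat \<Rightarrow> complex" where
  "hankel h = (\<lambda>i j. h (i + j))"

definition hankel_vec_prod :: "nat \<Rightarrow> (nat \<Rightarrow> complex) \<Rightarrow> (nat \<Rightarrow> complex) \<Rightarrow> (nat \<Rightarrow> complex)" where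
  "hankel_vec_prod n h v = (\<lambda>i. \<Sum>j<n. hankel h i j * v j)"

text \<open>Hankel matrix-Hankel matrix product (H, K) |-> H K, with C^(n x n) identified with
  C^(n*n) via entry (i,j) |-> coordinate i*n + j.\<close>
definition hankel_hankel_prod :: "nat \<Rightarrow> (nat \<Rightarrow> complex) \<Rightarrow> (nat \<Rightarrow> complex) \<Rightarrow> (nat \<Rightarrow> complex)" where
  "hankel_hankel_prod n h g = (\<lambda>p. \<Sum>t<n. hankel h (p div n) t * hankel g t (p mod n))"

end

theory Submission imports Defs "Jordan_Normal_Form.Determinant" begin

definition omg :: "nat \<Rightarrow> complex" where "omg N = exp (2 * of_real pi * \<i> / of_nat N)"

lemma omg_pow: "omg N ^ m = exp(2 * of_real pi * \<i> * of_nat m / of_nat N)"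
  unfolding omg_def by (metis exp_of_nat_mult times_divide_eq_right mult.commute)

lemma omg_pow_eq_1: "N \<ge> 1 \<Longrightarrow> omg N ^ m = 1 \<longleftrightarrow> N dvd m"
  using omg_pow complex_root_unity_eq_1 by metis

lemma dft_sum:
  assumes "N \<ge> 1"
  shows "(\<Sum>l<N. omg N ^ (l * m)) = (if N dvd m then of_nat N else 0)"
proof (cases "N dvd m")
  case True
  then have "omg N ^ (l * m) = 1" for l using omg_pow_eq_1[OF assms, of "l*m"] by simp
  then show ?thesis using True by simp
next
  case False
  let ?z = "omg N ^ m"
  have z1: "?z \<noteq> 1" using False omg_pow_eq_1[OF assms] by simp
  have "(\<Sum>l<N. omg N ^ (l * m)) = (\<Sum>l<N. ?z ^ l)"
    by (intro sum.cong refl) (metis power_mult mult.commute)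
  also have "\<dots> = (?z ^ N - 1) / (?z - 1)" using z1 by (simp add: geometric_sum)
  also have "?z ^ N = 1" using omg_pow_eq_1[OF assms]
    by (metis dvd_triv_left mult.commute power_mult)
  finally show ?thesis using False by simp
qed

definition uu :: "nat \<Rightarrow> nat \<Rightarrow> nat \<Rightarrow> complex" where
  "uu N l i = omg N ^ (l * (N - i)) / of_nat N"

lemma dft_delta:
  assumes "N \<ge> 1" "i < N" "a + b < N"
  shows "(\<Sum>l<N. uu N l i * omg N ^ (l * a) * omg N ^ (l * b)) = (if i = a + b then 1 else 0)"
proof -
  have "(\<Sum>l<N. uu N l i * omg N ^ (l * a) * omg N ^ (l * b))
      = (\<Sum>l<N. omg N ^ (l * (N - i + a + b))) / of_nat N"
    unfolding uu_def sum_divide_distrib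
    by (intro sum.cong refl) (simp add: power_add[symmetric] algebra_simps)
  also have "N dvd (N - i + a + b) \<longleftrightarrow> i = a + b"
  proof
    assume "N dvd (N - i + a + b)"
    moreover have "0 < N - i + a + b" "N - i + a + b < 2 * N" using assms by auto
    ultimately obtain c where c: "N - i + a + b = N * c" "0 < N * c" "N * c < 2 * N"
      by (metis dvdE)
    have "c \<noteq> 0" using c by auto
    moreover have "\<not> c \<ge> 2"
    proof
      assume "c \<ge> 2" then have "N * 2 \<le> N * c" by simp
      then show False using c by simp
    qed
    ultimately have "c = 1" by linarith
    then have "N - i + a + b = N" using c by simp
    then show "i = a + b" using assms by linarith
  next
    assume "i = a + b" then show "N dvd (N - i + a + b)" using assms by simp
  qed
  ultimately show ?thesis using assms by (simp add: dft_sum)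
qed

lemma det_tendsto:
  fixes f :: "nat \<Rightarrow> nat \<Rightarrow> nat \<Rightarrow> complex" and g :: "nat \<Rightarrow> nat \<Rightarrow> complex"
  assumes "\<And>i j. i < N \<Longrightarrow> j < N \<Longrightarrow> (\<lambda>m. f m i j) \<longlonglongrightarrow> g i j"
  shows "(\<lambda>m. Determinant.det (Matrix.mat N N (\<lambda>(i,j). f m i j)))
           \<longlonglongrightarrow> Determinant.det (Matrix.mat N N (\<lambda>(i,j). g i j))"
proof -
  have eq: "Determinant.det (Matrix.mat N N (\<lambda>(i,j). h i j)) =
     (\<Sum>p\<in>{p. p permutes {0..<N}}. signof p * (\<Prod>i = 0..<N. h i (p i)))" for h :: "nat \<Rightarrow> nat \<Rightarrow> complex"
    unfolding det_def'[of "Matrix.mat N N (\<lambda>(i,j). h i j)" N, OF mat_carrier]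
    by (intro sum.cong refl arg_cong2[where f="(*)"] prod.cong)
       (auto simp: permutes_in_image)
  show ?thesis unfolding eq
    by (intro tendsto_intros assms) (auto simp: permutes_in_image)
qed

lemma det_zero_of_rank:
  assumes "rank_le N b c M r" "r < N" "\<And>i'. i' < N \<Longrightarrow> jj i' < b \<and> kk i' < c"
  shows "Determinant.det (Matrix.mat N N (\<lambda>(i,i'). M i (jj i') (kk i'))) = 0"
proof -
  obtain u v w where uvw: "\<forall>i<N. \<forall>j<b. \<forall>k<c. M i j k = (\<Sum>l<r. u l i * v l j * w l k)"
    using assms(1) unfolding rank_le_def by blast
  define A where "A = Matrix.mat N N (\<lambda>(i,l). if l < r then u l i else 0)"
  define B where "B = Matrix.mat N N (\<lambda>(l,i'). if l < r then v l (jj i') * w l (kk i') else 0)"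
  have AB: "Matrix.mat N N (\<lambda>(i,i'). M i (jj i') (kk i')) = A * B"
  proof (rule eq_matI)
    fix i i' assume ii: "i < dim_row (A * B)" "i' < dim_col (A * B)"
    then have ii': "i < N" "i' < N" by (auto simp: A_def B_def)
    have "(A * B) $$ (i, i') = (\<Sum>l\<in>{0..<N}. (if l < r then u l i * (v l (jj i') * w l (kk i')) else 0))"
      using ii' by (simp add: A_def B_def scalar_prod_def, intro sum.cong) auto
    also have "\<dots> = (\<Sum>l\<in>{l\<in>{0..<N}. l < r}. u l i * (v l (jj i') * w l (kk i')))"
      by (subst sum.inter_filter) auto
    also have "{l\<in>{0..<N}. l < r} = {..<r}" using assms(2) by auto
    also have "(\<Sum>l<r. u l i * (v l (jj i') * w l (kk i'))) = M i (jj i') (kk i')"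
      using uvw ii' assms(3)[OF ii'(2)] by (simp add: mult.assoc)
    finally show "Matrix.mat N N (\<lambda>(i,i'). M i (jj i') (kk i')) $$ (i, i') = (A * B) $$ (i, i')"
      using ii' by simp
  qed (auto simp: A_def B_def)
  have "Determinant.det B = 0"
  proof -
    have "B \<in> carrier_mat N N" by (simp add: B_def)
    then have "Determinant.det B = (\<Sum>p\<in>{p. p permutes {0..<N}}. signof p * (\<Prod>i = 0..<N. B $$ (i, p i)))"
      by (rule det_def')
    also have "\<dots> = 0"
    proof (intro sum.neutral ballI)
      fix p assume "p \<in> {p. p permutes {0..<N}}"
      then have "p (N - 1) < N" using assms(2) by (auto simp: permutes_in_image)
      then have "B $$ (N - 1, p (N - 1)) = 0" using assms(2) by (simp add: B_def)
      then have "(\<Prod>i = 0..<N. B $$ (i, p i)) = 0"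
        using assms(2) by (intro prod_zero) auto
      then show "signof p * (\<Prod>i = 0..<N. B $$ (i, p i)) = 0" by simp
    qed
    finally show ?thesis .
  qed
  then show ?thesis unfolding AB
    by (subst det_mult[of _ N]) (auto simp: A_def B_def)
qed

lemma T1_eq:
  assumes "j < n"
  shows "structure_tensor (hankel_vec_prod n) i j k = (if i = j + k then 1 else 0)"
proof -
  have "structure_tensor (hankel_vec_prod n) i j k
      = (\<Sum>t<n. (if k + t = i then 1 else 0) * (if t = j then 1 else 0))"
    by (simp add: structure_tensor_def hankel_vec_prod_def hankel_def Defs.unit_vec_def)
  also have "\<dots> = (\<Sum>t<n. if t = j then (if k + j = i then 1 else 0) else 0)"
    by (intro sum.cong refl) auto
  also have "\<dots> = (if i = j + k then 1 else 0)" using assms by (simp add: add.commute)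
  finally show ?thesis .
qed

lemma T1_rank_le:
  assumes "n \<ge> 1"
  shows "rank_le (2*n-1) n n (structure_tensor (hankel_vec_prod n)) (2*n-1)"
  unfolding rank_le_def
proof (intro exI allI impI)
  fix i j k assume "i < 2*n-1" "j < n" "k < n"
  then show "structure_tensor (hankel_vec_prod n) i j k =
     (\<Sum>l<2*n-1. uu (2*n-1) l i * omg (2*n-1) ^ (l * j) * omg (2*n-1) ^ (l * k))"
    using assms by (subst dft_delta) (auto simp: T1_eq)
qed

definition jj :: "nat \<Rightarrow> nat \<Rightarrow> nat" where "jj n i = min i (n - 1)"
definition kk :: "nat \<Rightarrow> nat \<Rightarrow> nat" where "kk n i = i - min i (n - 1)"

lemma jj_kk: "n \<ge> 1 \<Longrightarrow> i < 2*n-1 \<Longrightarrow> jj n i < n \<and> kk n i < n"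
  by (auto simp: jj_def kk_def)

lemma T1_mat:
  assumes "n \<ge> 1"
  shows "Matrix.mat (2*n-1) (2*n-1) (\<lambda>(i,i'). structure_tensor (hankel_vec_prod n) i (jj n i') (kk n i'))
     = 1\<^sub>m (2*n-1)"
proof (rule eq_matI)
  fix i i' assume "i < dim_row (1\<^sub>m (2*n-1) :: complex mat)" "i' < dim_col (1\<^sub>m (2*n-1) :: complex mat)"
  then have "i < 2*n-1" "i' < 2*n-1" by auto
  moreover have "jj n i' + kk n i' = i'" by (simp add: jj_def kk_def)
  ultimately show "Matrix.mat (2*n-1) (2*n-1) (\<lambda>(i,i'). structure_tensor (hankel_vec_prod n) i (jj n i') (kk n i')) $$ (i, i') = 1\<^sub>m (2*n-1) $$ (i, i')"
    using jj_kk[OF assms] by (simp add: T1_eq)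
qed auto

lemma T1_not_rank_le:
  assumes "n \<ge> 1" "r < 2*n-1"
  shows "\<not> rank_le (2*n-1) n n (structure_tensor (hankel_vec_prod n)) r"
proof
  assume "rank_le (2*n-1) n n (structure_tensor (hankel_vec_prod n)) r"
  from det_zero_of_rank[OF this assms(2), of "jj n" "kk n"] jj_kk[OF assms(1)]
  have "Determinant.det (Matrix.mat (2*n-1) (2*n-1) (\<lambda>(i,i'). structure_tensor (hankel_vec_prod n) i (jj n i') (kk n i'))) = 0" by blast
  then have "Determinant.det (1\<^sub>m (2*n-1) :: complex mat) = 0" unfolding T1_mat[OF assms(1)] .
  then show False by simp
qed

lemma T1_border_ge:
  assumes "n \<ge> 1" "r < 2*n-1"
    and S: "\<forall>m. rank_le (2*n-1) n n (S m) r"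
    and lim: "\<forall>i<2*n-1. \<forall>j<n. \<forall>k<n. (\<lambda>m. S m i j k) \<longlonglongrightarrow> structure_tensor (hankel_vec_prod n) i j k"
  shows False
proof -
  let ?N = "2*n-1"
  have "(\<lambda>m. Determinant.det (Matrix.mat ?N ?N (\<lambda>(i,j). S m i (jj n j) (kk n j))))
           \<longlonglongrightarrow> Determinant.det (Matrix.mat ?N ?N (\<lambda>(i,j). structure_tensor (hankel_vec_prod n) i (jj n j) (kk n j)))"
    by (rule det_tendsto) (use lim jj_kk[OF assms(1)] in auto)
  moreover have "Determinant.det (Matrix.mat ?N ?N (\<lambda>(i,j). S m i (jj n j) (kk n j))) = 0" for m
    using det_zero_of_rank[OF S[rule_format, of m] assms(2), of "jj n" "kk n"] jj_kk[OF assms(1)] by auto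
  ultimately have "(\<lambda>m. 0::complex) \<longlonglongrightarrow> Determinant.det (1\<^sub>m (2*n-1) :: complex mat)"
    unfolding T1_mat[OF assms(1)] by simp
  then have "(\<lambda>m. 0::complex) \<longlonglongrightarrow> 1" by simp
  then show False using LIMSEQ_unique[OF tendsto_const] by fastforce
qed

lemma part1:
  assumes "n \<ge> 1"
  shows "tensor_rank (2*n - 1) n n (structure_tensor (hankel_vec_prod n)) = 2*n - 1"
  unfolding tensor_rank_def
  by (rule Least_equality) (use T1_rank_le[OF assms] T1_not_rank_le[OF assms] in \<open>auto simp: not_le[symmetric]\<close>)

lemma part2:
  assumes "n \<ge> 1"
  shows "border_rank (2*n - 1) n n (structure_tensor (hankel_vec_prod n)) = 2*n - 1"
  unfolding border_rank_def
proof (rule Least_equality)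
  show "\<exists>S. (\<forall>m. rank_le (2*n-1) n n (S m) (2*n-1)) \<and>
      (\<forall>i<2*n-1. \<forall>j<n. \<forall>k<n. (\<lambda>m. S m i j k) \<longlonglongrightarrow> structure_tensor (hankel_vec_prod n) i j k)"
    using T1_rank_le[OF assms] by (intro exI[of _ "\<lambda>m. structure_tensor (hankel_vec_prod n)"]) simp
next
  fix r assume "\<exists>S. (\<forall>m. rank_le (2*n-1) n n (S m) r) \<and>
      (\<forall>i<2*n-1. \<forall>j<n. \<forall>k<n. (\<lambda>m. S m i j k) \<longlonglongrightarrow> structure_tensor (hankel_vec_prod n) i j k)"
  then show "2*n-1 \<le> r" using T1_border_ge[OF assms] by (meson not_le)
qed

lemma T2_eq:
  "structure_tensor (hankel_hankel_prod n) i j p =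
    (if p mod n \<le> j \<and> j - p mod n < n \<and> i = p div n + (j - p mod n) then 1 else 0)"
proof -
  have "structure_tensor (hankel_hankel_prod n) i j p
      = (\<Sum>t<n. (if p div n + t = i then 1 else 0) * (if t + p mod n = j then 1 else 0))"
    by (simp add: structure_tensor_def hankel_hankel_prod_def hankel_def Defs.unit_vec_def)
  also have "\<dots> = (\<Sum>t<n. if t = j - p mod n then
        (if p mod n \<le> j \<and> i = p div n + (j - p mod n) then 1 else 0) else 0)"
    by (intro sum.cong refl) auto
  also have "\<dots> = (if p mod n \<le> j \<and> j - p mod n < n \<and> i = p div n + (j - p mod n) then 1 else 0)"
    by simp
  finally show ?thesis .
qed

lemma sum_group:
  fixes F :: "nat \<Rightarrow> complex"
  shows "(\<Sum>L<n*N. F L) = (\<Sum>b<n. \<Sum>l<N. F (b*N + l))"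
proof -
  have "(\<Sum>L<n*N. F L) = (\<Sum>b<n. \<Sum>L\<in>{b*N..<b*N+N}. F L)"
    by (rule sum.nat_group[symmetric])
  also have "\<dots> = (\<Sum>b<n. \<Sum>l<N. F (b*N + l))"
  proof (rule sum.cong[OF refl])
    fix b
    have "(\<Sum>L\<in>{b*N..<b*N+N}. F L) = (\<Sum>L\<in>{0+b*N..<N+b*N}. F L)" by (simp add: add.commute)
    also have "\<dots> = (\<Sum>l\<in>{0..<N}. F (l + b*N))" by (rule sum.shift_bounds_nat_ivl)
    finally show "(\<Sum>L\<in>{b*N..<b*N+N}. F L) = (\<Sum>l<N. F (b*N + l))"
      by (simp add: atLeast0LessThan add.commute)
  qed
  finally show ?thesis .
qed

lemma part3:
  assumes "n \<ge> 1"
  shows "tensor_rank (2*n - 1) (2*n - 1) (n*n) (structure_tensor (hankel_hankel_prod n)) \<le> n * (2*n - 1)"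
proof -
  let ?N = "2*n - 1"
  define u where "u L i = uu ?N (L mod ?N) i" for L i
  define v where "v L j = (if L div ?N \<le> j \<and> j - L div ?N < n then omg ?N ^ ((L mod ?N) * (j - L div ?N)) else 0)" for L j
  define w where "w L p = (if p mod n = L div ?N then omg ?N ^ ((L mod ?N) * (p div n)) else 0)" for L p
  have N1: "?N \<ge> 1" using assms by simp
  have "rank_le ?N ?N (n*n) (structure_tensor (hankel_hankel_prod n)) (n * ?N)"
    unfolding rank_le_def
  proof (intro exI allI impI)
    fix i j p assume ij: "i < ?N" "j < ?N" "p < n*n"
    have a: "p div n < n" using ij(3) by (simp add: less_mult_imp_div_less)
    have b: "p mod n < n" using assms by simp
    have "(\<Sum>L<n*?N. u L i * v L j * w L p)
        = (\<Sum>c<n. \<Sum>l<?N. u (c*?N + l) i * v (c*?N + l) j * w (c*?N + l) p)"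
      by (rule sum_group)
    also have "\<dots> = (\<Sum>c<n. if c = p mod n then
          (\<Sum>l<?N. uu ?N l i * v (c*?N + l) j * omg ?N ^ (l * (p div n))) else 0)"
      using N1 by (intro sum.cong refl) (auto simp: u_def w_def)
    also have "\<dots> = (\<Sum>l<?N. uu ?N l i * v (p mod n * ?N + l) j * omg ?N ^ (l * (p div n)))"
      using b by simp
    also have "\<dots> = (if p mod n \<le> j \<and> j - p mod n < n then
          (\<Sum>l<?N. uu ?N l i * omg ?N ^ (l * (j - p mod n)) * omg ?N ^ (l * (p div n))) else 0)"
      using N1 by (auto simp: v_def intro!: sum.cong)
    also have "\<dots> = structure_tensor (hankel_hankel_prod n) i j p"
      using N1 ij a by (auto simp: T2_eq dft_delta)
    finally show "structure_tensor (hankel_hankel_prod n) i j p = (\<Sum>L<n*?N. u L i * v L j * w L p)" ..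
  qed
  then show ?thesis unfolding tensor_rank_def by (rule Least_le)
qed

theorem mainTheorem11:
  fixes n :: nat
  assumes "n \<ge> 1"
  shows "tensor_rank (2*n - 1) n n (structure_tensor (hankel_vec_prod n)) = 2*n - 1
       \<and> border_rank (2*n - 1) n n (structure_tensor (hankel_vec_prod n)) = 2*n - 1
       \<and> tensor_rank (2*n - 1) (2*n - 1) (n*n) (structure_tensor (hankel_hankel_prod n)) \<le> n * (2*n - 1)"
  using part1[OF assms] part2[OF assms] part3[OF assms] by blast

end
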